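(* Let $\omega$ be a non-quasianalytic subadditive weight function, let $u\in\mathcal{S}'_\omega(\mathbb R^d)$, $\varphi\in\mathcal{S}_\omega(\mathbb R^d)\setminus\{0\}$, let $\Lambda=\alpha\mathbb Z^d\times\beta\mathbb Z^d$ with $\alpha,\beta>0$, and let $\Gamma\subseteq\mathbb R^{2d}\setminus\{0\}$ be an open conic set. Then $$\sup_{\sigma\in\Lambda\cap\Gamma}e^{\lambda\omega(\sigma)}|\langle u,\Pi(\sigma)\varphi\rangle|<+\infty\quad\forall\lambda>0$$ holds if and only if $$\sum_{\sigma\in\Lambda\cap\Gamma}e^{\lambda\omega(\sigma)}|\langle u,\Pi(\sigma)\varphi\rangle|^2<+\infty\quad\forall\lambda>0.$$
   Context: A non-quasianalytic subadditive weight function is a continuous increasing function $\omega:[0,+\infty)\to[0,+\infty)$ such that: ($\alpha$) $\omega(t_1+t_2)\le\omega(t_1)+\omega(t_2)$ for all $t_1,t_2\ge0$; ($\beta$) $\int_1^{+\infty}\omega(t)t^{-2}\,dt<+\infty$; ($\gamma$) there exist $a\in\mathbb R$, $b>0$ with $\omega(t)\ge a+b\log(1+t)$ for all $t\ge0$; ($\delta$) $\varphi(t):=\omega(e^t)$ is convex. For $\zeta$ in $\mathbb R^n$ or $\mathbb C^n$ one writes $\omega(\zeta):=\omega(|\zeta|)$ with $|\cdot|$ the Euclidean norm. The space $\mathcal{S}_\omega(\mathbb R^d)$ is the set of Schwartz functions $f$ such that for all $\lambda>0$ and $\alpha\in\mathbb N_0^d$, $\sup_x|D^\alpha f(x)|e^{\lambda\omega(x)}<\infty$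 and $\sup_\xi|D^\alpha\hat f(\xi)|e^{\lambda\omega(\xi)}<\infty$, where $\hat f(\xi)=\int f(x)e^{-ix\cdot\xi}dx$; $\mathcal{S}'_\omega(\mathbb R^d)$ is its strong dual, with the duality $\langle\cdot,\cdot\rangle$ conjugate-linear in the second argument (extending the $L^2$ inner product). For $z=(x,\xi)\in\mathbb R^{2d}$, $\Pi(z)f(t)=e^{it\cdot\xi}f(t-x)$. *)

theory Defs
  imports "HOL-Analysis.Analysis"
begin

definition nq_weight :: "(real \<Rightarrow> real) \<Rightarrow> bool" where
  "nq_weight \<omega> \<longleftrightarrow>
     continuous_on {0..} \<omega> \<and> mono_on {0..} \<omega> \<and> (\<forall>t\<ge>0. \<omega> t \<ge> 0) \<and>
     (\<forall>t1\<ge>0. \<forall>t2\<ge>0. \<omega> (t1 + t2) \<le> \<omega> t1 + \<omega> t2) \<and>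
     set_integrable lborel {1..} (\<lambda>t. \<omega> t / t\<^sup>2) \<and>
     (\<exists>a b. b > 0 \<and> (\<forall>t\<ge>0. \<omega> t \<ge> a + b * ln (1 + t))) \<and>
     convex_on UNIV (\<lambda>t. \<omega> (exp t))"

text \<open>Partial derivative in the i-th coordinate direction, and iterated partial
  derivatives indexed by a list of directions (covers all multi-indices).\<close>
definition pdiff :: "'n::finite \<Rightarrow> (real^'n \<Rightarrow> complex) \<Rightarrow> real^'n \<Rightarrow> complex" where
  "pdiff i f = (\<lambda>x. frechet_derivative f (at x) (axis i 1))"

fun Dlist :: "'n::finite list \<Rightarrow> (real^'n \<Rightarrow> complex) \<Rightarrow> real^'n \<Rightarrow> complex" where
  "Dlist [] f = f"
| "Dlist (i # is) f = pdiff i (Dlist is f)"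

definition smooth_fun :: "(real^'n::finite \<Rightarrow> complex) \<Rightarrow> bool" where
  "smooth_fun f \<longleftrightarrow> (\<forall>is x. Dlist is f differentiable (at x))"

definition schwartz :: "(real^'n::finite \<Rightarrow> complex) \<Rightarrow> bool" where
  "schwartz f \<longleftrightarrow> smooth_fun f \<and>
     (\<forall>is. \<forall>k::nat. bdd_above (range (\<lambda>x. (1 + norm x) ^ k * norm (Dlist is f x))))"

definition fourier :: "(real^'n::finite \<Rightarrow> complex) \<Rightarrow> real^'n \<Rightarrow> complex" where
  "fourier f = (\<lambda>\<xi>. integral\<^sup>L lborel (\<lambda>x. f x * cis (- (x \<bullet> \<xi>))))"

definition S_omega :: "(real \<Rightarrow> real) \<Rightarrow> (real^'n::finite \<Rightarrow> complex) set" where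
  "S_omega \<omega> = {f. schwartz f \<and>
     (\<forall>l>0. \<forall>is.
        bdd_above (range (\<lambda>x. norm (Dlist is f x) * exp (l * \<omega> (norm x)))) \<and>
        bdd_above (range (\<lambda>\<xi>. norm (Dlist is (fourier f) \<xi>) * exp (l * \<omega> (norm \<xi>)))))}"

definition seminorm_S :: "(real \<Rightarrow> real) \<Rightarrow> real \<Rightarrow> 'n::finite list \<Rightarrow> (real^'n \<Rightarrow> complex) \<Rightarrow> real" where
  "seminorm_S \<omega> l is f =
     (SUP x. norm (Dlist is f x) * exp (l * \<omega> (norm x))) +
     (SUP \<xi>. norm (Dlist is (fourier f) \<xi>) * exp (l * \<omega> (norm \<xi>)))"

text \<open>Elements of the dual \<open>S'_\<omega>\<close>: continuous linear functionals on \<open>S_\<omega>\<close>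
  (continuity w.r.t. the Frechet topology given by the seminorms above).\<close>
definition S'_omega :: "(real \<Rightarrow> real) \<Rightarrow> ((real^'n::finite \<Rightarrow> complex) \<Rightarrow> complex) set" where
  "S'_omega \<omega> = {U.
     (\<forall>f\<in>S_omega \<omega>. \<forall>g\<in>S_omega \<omega>. U (\<lambda>x. f x + g x) = U f + U g) \<and>
     (\<forall>f\<in>S_omega \<omega>. \<forall>c. U (\<lambda>x. c * f x) = c * U f) \<and>
     (\<exists>C l N. \<forall>f\<in>S_omega \<omega>.
        norm (U f) \<le> C * (\<Sum>is\<in>{is::'n list. length is \<le> N}. seminorm_S \<omega> l is f))}"

text \<open>Duality extending the L2 inner product: conjugate-linear in the second argument.\<close>
definition dual_pair :: "((real^'n::finite \<Rightarrow> complex) \<Rightarrow> complex) \<Rightarrow> (real^'n \<Rightarrow> complex) \<Rightarrow> complex" where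
  "dual_pair U g = U (\<lambda>x. cnj (g x))"

definition tf_shift :: "(real^'n::finite) \<times> (real^'n) \<Rightarrow> (real^'n \<Rightarrow> complex) \<Rightarrow> real^'n \<Rightarrow> complex" where
  "tf_shift z f = (\<lambda>t. cis (t \<bullet> snd z) * f (t - fst z))"

definition tf_lattice :: "real \<Rightarrow> real \<Rightarrow> ((real^'n::finite) \<times> (real^'n)) set" where
  "tf_lattice a b = {(x, \<xi>). \<forall>i. (\<exists>k::int. x $ i = a * of_int k) \<and> (\<exists>m::int. \<xi> $ i = b * of_int m)}"

definition conic :: "('a::real_vector) set \<Rightarrow> bool" where
  "conic G \<longleftrightarrow> (\<forall>z\<in>G. \<forall>t>0. t *\<^sub>R z \<in> G)"

end

theory Submission
  imports Defs
begin


lemma int_summ: "(\<lambda>j::int. inverse ((1 + \<bar>real_of_int j\<bar>)^2)) summable_on UNIV"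
proof -
  let ?p = "\<lambda>j::int. inverse ((1 + \<bar>real_of_int j\<bar>)^2)"
  have s0: "summable (\<lambda>n. inverse (real n ^ 2))" by (rule inverse_power_summable) simp
  have s1: "summable (\<lambda>n. inverse (real (Suc n) ^ 2))"
    using s0 summable_Suc_iff[of "\<lambda>n. inverse (real n ^ 2)"] by simp
  have "(?p \<circ> int) summable_on UNIV"
  proof -
    have "summable (?p \<circ> int)"
      using s1 by (simp add: o_def add.commute)
    then show ?thesis by (subst summable_on_UNIV_nonneg_real_iff) auto
  qed
  hence A: "?p summable_on range int"
    by (subst summable_on_reindex) (auto simp: inj_on_def)
  have "(?p \<circ> (\<lambda>n. - int n)) summable_on UNIV"
  proof -
    have "summable (?p \<circ> (\<lambda>n. - int n))"
      using s1 by (simp add: o_def add.commute)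
    then show ?thesis by (subst summable_on_UNIV_nonneg_real_iff) auto
  qed
  hence B: "?p summable_on range (\<lambda>n. - int n)"
    by (subst summable_on_reindex) (auto simp: inj_on_def)
  have U: "(UNIV::int set) = range int \<union> range (\<lambda>n. - int n)"
    by (auto simp: image_iff) (metis int_cases2)
  show ?thesis using summable_on_union[OF A B] U by simp
qed


lemma lattice_coord:
  assumes "a > 0" "b > 0" "\<sigma> \<in> tf_lattice a b"
  shows "fst \<sigma> $ i = a * of_int (round (fst \<sigma> $ i / a))"
    and "snd \<sigma> $ i = b * of_int (round (snd \<sigma> $ i / b))"
proof -
  obtain x \<xi> where s: "\<sigma> = (x, \<xi>)" by fastforce
  from assms(3) obtain k m where k: "x $ i = a * of_int k" and m: "\<xi> $ i = b * of_int m"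
    unfolding tf_lattice_def s by blast
  show "fst \<sigma> $ i = a * of_int (round (fst \<sigma> $ i / a))"
    using k assms(1) by (simp add: s)
  show "snd \<sigma> $ i = b * of_int (round (snd \<sigma> $ i / b))"
    using m assms(2) by (simp add: s)
qed

lemma lattice_summ:
  assumes ab: "a > 0" "b > 0"
  shows "(\<lambda>\<sigma>::(real^'n::finite)\<times>(real^'n). inverse ((1 + norm \<sigma>)^(4*CARD('n))))
           summable_on tf_lattice a b"
proof -
  define p where "p j = inverse ((1 + \<bar>real_of_int j\<bar>)^2)" for j :: int
  define h where "h q = (\<Prod>j\<in>UNIV. p (q j))" for q :: "'n + 'n \<Rightarrow> int"
  define qf where "qf \<sigma> = (\<lambda>j. case j of Inl i \<Rightarrow> round (fst \<sigma> $ i / a)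
                                  | Inr i \<Rightarrow> round (snd \<sigma> $ i / b))"
    for \<sigma> :: "(real^'n)\<times>(real^'n)"
  define L :: "((real^'n)\<times>(real^'n)) set" where "L = tf_lattice a b"
  have p_nn: "p j \<ge> 0" for j by (simp add: p_def)
  have ps: "p summable_on UNIV" using int_summ unfolding p_def .
  hence "Infinite_Sum.abs_summable_on p UNIV" using p_nn by simp
  hence "Infinite_Set_Sum.abs_summable_on p UNIV" using abs_summable_equivalent by blast
  hence "Infinite_Set_Sum.abs_summable_on (\<lambda>g::'n+'n\<Rightarrow>int. \<Prod>x\<in>UNIV. (\<lambda>_. p) x (g x)) (PiE UNIV (\<lambda>_. UNIV))"
    by (intro abs_summable_on_prod_PiE) auto
  hence "Infinite_Set_Sum.abs_summable_on h UNIV" unfolding h_def by simp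
  hence "Infinite_Sum.abs_summable_on h UNIV" using abs_summable_equivalent by blast
  moreover have "norm (h q) = h q" for q unfolding h_def using p_nn by (simp add: prod_nonneg)
  ultimately have hs: "h summable_on UNIV" by simp
  have inj: "inj_on qf L"
  proof (rule inj_onI)
    fix s t assume s: "s \<in> L" and t: "t \<in> L" and e: "qf s = qf t"
    have "fst s $ i = fst t $ i" for i
    proof -
      have "round (fst s $ i / a) = round (fst t $ i / a)"
        using fun_cong[OF e, of "Inl i"] by (simp add: qf_def)
      thus ?thesis using lattice_coord(1)[OF ab, of s i] lattice_coord(1)[OF ab, of t i] s t
        unfolding L_def by metis
    qed
    moreover have "snd s $ i = snd t $ i" for i
    proof -
      have "round (snd s $ i / b) = round (snd t $ i / b)"
        using fun_cong[OF e, of "Inr i"] by (simp add: qf_def)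
      thus ?thesis using lattice_coord(2)[OF ab, of s i] lattice_coord(2)[OF ab, of t i] s t
        unfolding L_def by metis
    qed
    ultimately show "s = t" by (simp add: prod_eq_iff vec_eq_iff)
  qed
  have "h summable_on qf ` L" using hs by (rule summable_on_subset_banach) simp
  hence hq: "(h \<circ> qf) summable_on L" using summable_on_reindex[OF inj] by blast
  define M where "M = 1 + 1/a + 1/b"
  define d where "d = 4 * CARD('n)"
  have bound: "inverse ((1 + norm \<sigma>)^d) \<le> M^d * (h \<circ> qf) \<sigma>" if sL: "\<sigma> \<in> L" for \<sigma>
  proof -
    define t where "t = 1 + norm \<sigma>"
    have t1: "t \<ge> 1" unfolding t_def by simp
    have M1: "M \<ge> 1" unfolding M_def using ab by simp
    have fac: "1 + \<bar>real_of_int (qf \<sigma> j)\<bar> \<le> M * t" for j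
    proof (cases j)
      case (Inl i)
      have "real_of_int (qf \<sigma> j) = fst \<sigma> $ i / a"
        using lattice_coord(1)[OF ab, of \<sigma> i] sL ab unfolding L_def Inl qf_def
        by (simp add: field_simps)
      also have "\<bar>\<dots>\<bar> \<le> norm \<sigma> / a"
        using ab component_le_norm_cart[of "fst \<sigma>" i] norm_fst_le[of "fst \<sigma>" "snd \<sigma>"]
        by (simp add: abs_div divide_right_mono)
      finally have "\<bar>real_of_int (qf \<sigma> j)\<bar> \<le> norm \<sigma> / a" .
      moreover have "1 + norm \<sigma> / a \<le> M * t"
        unfolding M_def t_def using ab by (simp add: field_simps)
      ultimately show ?thesis by linarith
    next
      case (Inr i)
      have "real_of_int (qf \<sigma> j) = snd \<sigma> $ i / b"
        using lattice_coord(2)[OF ab, of \<sigma> i] sL ab unfolding L_def Inr qf_def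
        by (simp add: field_simps)
      also have "\<bar>\<dots>\<bar> \<le> norm \<sigma> / b"
        using ab component_le_norm_cart[of "snd \<sigma>" i] norm_snd_le[of "snd \<sigma>" "fst \<sigma>"]
        by (simp add: abs_div divide_right_mono)
      finally have "\<bar>real_of_int (qf \<sigma> j)\<bar> \<le> norm \<sigma> / b" .
      moreover have "1 + norm \<sigma> / b \<le> M * t"
        unfolding M_def t_def using ab by (simp add: field_simps)
      ultimately show ?thesis by linarith
    qed
    have "(\<Prod>j\<in>UNIV. (1 + \<bar>real_of_int (qf \<sigma> j)\<bar>)^2) \<le> (\<Prod>j\<in>(UNIV::('n+'n) set). (M*t)^2)"
      by (intro prod_mono conjI power_mono fac) auto
    also have "\<dots> = (M*t)^d"
      by (simp add: d_def card_UNIV_sum power_mult[symmetric])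
    finally have P: "(\<Prod>j\<in>UNIV. (1 + \<bar>real_of_int (qf \<sigma> j)\<bar>)^2) \<le> (M*t)^d" .
    have Ppos: "(\<Prod>j\<in>UNIV. (1 + \<bar>real_of_int (qf \<sigma> j)\<bar>)^2) > 0"
      by (intro prod_pos) (auto intro: add_pos_nonneg)
    have hq: "(h \<circ> qf) \<sigma> = inverse (\<Prod>j\<in>UNIV. (1 + \<bar>real_of_int (qf \<sigma> j)\<bar>)^2)"
      unfolding h_def p_def o_def using prod_inversef[of "\<lambda>j. (1 + \<bar>real_of_int (qf \<sigma> j)\<bar>)^2" UNIV]
      by (simp add: o_def)
    have "inverse ((M*t)^d) \<le> (h \<circ> qf) \<sigma>"
      unfolding hq using P Ppos by (rule le_imp_inverse_le)
    hence "M^d * inverse ((M*t)^d) \<le> M^d * (h \<circ> qf) \<sigma>"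
      using M1 by (intro mult_left_mono) auto
    moreover have "M^d * inverse ((M*t)^d) = inverse (t^d)"
      using M1 t1 by (simp add: power_mult_distrib field_simps)
    ultimately show ?thesis unfolding t_def by simp
  qed
  have "(\<lambda>\<sigma>. M^d * (h \<circ> qf) \<sigma>) summable_on L" using hq by (rule summable_on_cmult_right)
  hence "(\<lambda>\<sigma>. inverse ((1 + norm \<sigma>)^d)) summable_on L"
    by (rule summable_on_comparison_test) (use bound in auto)
  thus ?thesis unfolding L_def d_def .
qed


lemma main_equiv:
  fixes F :: "'a::real_normed_vector \<Rightarrow> real" and \<omega> :: "real \<Rightarrow> real"
  assumes Fnn: "\<And>\<sigma>. F \<sigma> \<ge> 0"
    and low: "\<And>t. t \<ge> 0 \<Longrightarrow> \<omega> t \<ge> a0 + b0 * ln (1 + t)" and b0: "b0 > 0"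
    and sumS: "(\<lambda>\<sigma>. inverse ((1 + norm \<sigma>)^d)) summable_on S"
  shows "(\<forall>l>0. bdd_above ((\<lambda>\<sigma>. exp (l * \<omega> (norm \<sigma>)) * F \<sigma>) ` S))
     \<longleftrightarrow> (\<forall>l>0. (\<lambda>\<sigma>. exp (l * \<omega> (norm \<sigma>)) * (F \<sigma>)\<^sup>2) summable_on S)"
proof
  assume H: "\<forall>l>0. bdd_above ((\<lambda>\<sigma>. exp (l * \<omega> (norm \<sigma>)) * F \<sigma>) ` S)"
  show "\<forall>l>0. (\<lambda>\<sigma>. exp (l * \<omega> (norm \<sigma>)) * (F \<sigma>)\<^sup>2) summable_on S"
  proof (intro allI impI)
    fix l :: real assume l: "l > 0"
    define \<kappa> where "\<kappa> = real d / b0"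
    define \<mu> where "\<mu> = (l + \<kappa>) / 2"
    have \<kappa>0: "\<kappa> \<ge> 0" unfolding \<kappa>_def using b0 by simp
    have \<mu>0: "\<mu> > 0" unfolding \<mu>_def using l \<kappa>0 by simp
    obtain B where B: "\<And>\<sigma>. \<sigma> \<in> S \<Longrightarrow> exp (\<mu> * \<omega> (norm \<sigma>)) * F \<sigma> \<le> B"
      using H \<mu>0 unfolding bdd_above_def by fastforce
    define C where "C = B^2 * exp (- \<kappa> * a0)"
    have bnd: "exp (l * \<omega> (norm \<sigma>)) * (F \<sigma>)\<^sup>2 \<le> C * inverse ((1 + norm \<sigma>)^d)"
      if s: "\<sigma> \<in> S" for \<sigma>
    proof -
      define w where "w = \<omega> (norm \<sigma>)"
      define t where "t = norm \<sigma>"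
      have e1: "exp (l * w) * (F \<sigma>)\<^sup>2 = (exp (\<mu> * w) * F \<sigma>)^2 * exp (- \<kappa> * w)"
        unfolding \<mu>_def by (simp add: power2_eq_square exp_add[symmetric] field_simps)
      have nn: "0 \<le> exp (\<mu> * w) * F \<sigma>" using Fnn by simp
      have sq: "(exp (\<mu> * w) * F \<sigma>)^2 \<le> B^2"
        using B[OF s] nn unfolding w_def by (intro power_mono) auto
      have "exp (- \<kappa> * w) \<le> exp (- \<kappa> * (a0 + b0 * ln (1 + t)))"
        using low[of t] \<kappa>0 unfolding w_def t_def by (simp add: mult_left_mono)
      also have "\<dots> = exp (- \<kappa> * a0) * exp (- (real d * ln (1 + t)))"
        unfolding \<kappa>_def using b0 by (simp add: exp_add[symmetric] field_simps)
      also have "exp (- (real d * ln (1 + t))) = inverse ((1 + t)^d)"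
        unfolding t_def by (simp add: exp_minus exp_of_nat_mult add_pos_nonneg)
      finally have ek: "exp (- \<kappa> * w) \<le> exp (- \<kappa> * a0) * inverse ((1 + t)^d)" .
      have "exp (l * w) * (F \<sigma>)\<^sup>2 \<le> B^2 * (exp (- \<kappa> * a0) * inverse ((1 + t)^d))"
        unfolding e1 by (intro mult_mono sq ek) auto
      thus ?thesis unfolding C_def w_def t_def by (simp add: mult.assoc)
    qed
    have "(\<lambda>\<sigma>. C * inverse ((1 + norm \<sigma>)^d)) summable_on S"
      using sumS by (rule summable_on_cmult_right)
    thus "(\<lambda>\<sigma>. exp (l * \<omega> (norm \<sigma>)) * (F \<sigma>)\<^sup>2) summable_on S"
      by (rule summable_on_comparison_test) (use bnd in auto)
  qed
next
  assume H: "\<forall>l>0. (\<lambda>\<sigma>. exp (l * \<omega> (norm \<sigma>)) * (F \<sigma>)\<^sup>2) summable_on S"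
  show "\<forall>l>0. bdd_above ((\<lambda>\<sigma>. exp (l * \<omega> (norm \<sigma>)) * F \<sigma>) ` S)"
  proof (intro allI impI)
    fix l :: real assume l: "l > 0"
    have "(\<lambda>\<sigma>. exp ((2*l) * \<omega> (norm \<sigma>)) * (F \<sigma>)\<^sup>2) summable_on S" using H l by simp
    then obtain S0 where hs: "((\<lambda>\<sigma>. exp ((2*l) * \<omega> (norm \<sigma>)) * (F \<sigma>)\<^sup>2) has_sum S0) S"
      unfolding summable_on_def by blast
    have "exp (l * \<omega> (norm \<sigma>)) * F \<sigma> \<le> sqrt S0" if s: "\<sigma> \<in> S" for \<sigma>
    proof -
      have "sum (\<lambda>\<sigma>. exp ((2*l) * \<omega> (norm \<sigma>)) * (F \<sigma>)\<^sup>2) {\<sigma>} \<le> S0"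
        by (rule finite_sum_le_has_sum[OF hs]) (use s in auto)
      hence "(exp (l * \<omega> (norm \<sigma>)) * F \<sigma>)^2 \<le> S0"
      proof -
        have "exp ((2*l) * \<omega> (norm \<sigma>)) = exp (l * \<omega> (norm \<sigma>)) * exp (l * \<omega> (norm \<sigma>))"
          by (simp add: exp_add[symmetric])
        thus "(\<Sum>\<sigma>\<in>{\<sigma>}. exp ((2*l) * \<omega> (norm \<sigma>)) * (F \<sigma>)\<^sup>2) \<le> S0 \<Longrightarrow> ?thesis"
          by (simp add: power2_eq_square algebra_simps)
      qed
      hence "sqrt ((exp (l * \<omega> (norm \<sigma>)) * F \<sigma>)^2) \<le> sqrt S0" by (rule real_sqrt_le_mono)
      thus ?thesis using Fnn[of \<sigma>] by simp
    qed
    thus "bdd_above ((\<lambda>\<sigma>. exp (l * \<omega> (norm \<sigma>)) * F \<sigma>) ` S)"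
      unfolding bdd_above_def by blast
  qed
qed



theorem lemma2p4:
  fixes \<omega> :: "real \<Rightarrow> real" and U :: "(real^'n::finite \<Rightarrow> complex) \<Rightarrow> complex"
    and \<phi> :: "real^'n \<Rightarrow> complex" and a b :: real and \<Gamma> :: "((real^'n) \<times> (real^'n)) set"
  assumes "nq_weight \<omega>"
    and "U \<in> S'_omega \<omega>"
    and "\<phi> \<in> S_omega \<omega>" and "\<phi> \<noteq> (\<lambda>x. 0)"
    and "a > 0" and "b > 0"
    and "open \<Gamma>" and "conic \<Gamma>" and "0 \<notin> \<Gamma>"
  shows "(\<forall>l>0. bdd_above ((\<lambda>\<sigma>. exp (l * \<omega> (norm \<sigma>)) * norm (dual_pair U (tf_shift \<sigma> \<phi>)))
                           ` (tf_lattice a b \<inter> \<Gamma>)))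
     \<longleftrightarrow> (\<forall>l>0. (\<lambda>\<sigma>. exp (l * \<omega> (norm \<sigma>)) * (norm (dual_pair U (tf_shift \<sigma> \<phi>)))\<^sup>2)
                      summable_on (tf_lattice a b \<inter> \<Gamma>))"
proof -
  from assms(1) obtain a0 b0 where b0: "b0 > 0" and low: "\<And>t. t \<ge> 0 \<Longrightarrow> \<omega> t \<ge> a0 + b0 * ln (1 + t)"
    unfolding nq_weight_def by blast
  have sumS: "(\<lambda>\<sigma>::(real^'n)\<times>(real^'n). inverse ((1 + norm \<sigma>)^(4*CARD('n)))) summable_on (tf_lattice a b \<inter> \<Gamma>)"
    by (rule summable_on_subset_banach[OF lattice_summ[OF assms(5,6)]]) auto
  show ?thesis
    by (rule main_equiv[where F = "\<lambda>\<sigma>. norm (dual_pair U (tf_shift \<sigma> \<phi>))", OF _ low b0 sumS]) auto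
qed

end
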